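(* Let $V:\mathbb{R}\to\mathbb{R}$ be $1$-periodic and four times continuously differentiable, and $n\ge3$. Let $H_1$ be the $n\times n$ matrix $n^2$ times the periodic second-difference matrix (diagonal entries $2$, entries $-1$ at positions $(k,k\pm1)$ taken cyclically, i.e. including $(1,n)$ and $(n,1)$), let $H_2=\operatorname{diag}(V(0),V(1/n),\dots,V((n-1)/n))$, and let $D_1$ be the $n\times n$ matrix with $(D_1\vec v)_0=n(v_{n-1}-v_0)$ and $(D_1\vec v)_k=n(v_{k-1}-v_k)$ for $1\le k\le n-1$ (indices $0,\dots,n-1$). Then $H_1=D_1^\dagger D_1$, and there exist constants $\widetilde C_1,\widetilde C_2$ depending on $V$ but not on $n$ such that for every $\vec v\in\mathbb{C}^n$: $$\|[H_1,H_2]\vec v\|_\star\le\widetilde C_1(\|D_1\vec v\|_\star+\|\vec v\|_\star),\qquad \|[H_1,[H_1,H_2]]\vec v\|_\star\le\widetilde C_2(\|H_1\vec v\|_\star+\|\vec v\|_\star).$$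
   Context: The rescaled 2-norm is $\|\vec v\|_\star=n^{-1/2}\|\vec v\|$ where $\|\cdot\|$ is the Euclidean norm. $[A,B]=AB-BA$. This is the central finite-difference discretization with $n$ equidistant nodes $x_k=k/n$ on $[0,1]$ with periodic boundary conditions. *)

theory Defs
  imports "HOL-Analysis.Analysis"
begin

text \<open>n x n complex matrices and vectors in C^n are represented by functions on
  indices 0..n-1 (values at indices >= n are irrelevant).\<close>

type_synonym cmat = "nat \<Rightarrow> nat \<Rightarrow> complex"
type_synonym cvec = "nat \<Rightarrow> complex"

definition mat_vec :: "nat \<Rightarrow> cmat \<Rightarrow> cvec \<Rightarrow> cvec" where
  "mat_vec n A v = (\<lambda>i. \<Sum>j<n. A i j * v j)"

definition mat_mul :: "nat \<Rightarrow> cmat \<Rightarrow> cmat \<Rightarrow> cmat" where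
  "mat_mul n A B = (\<lambda>i k. \<Sum>j<n. A i j * B j k)"

definition mat_adj :: "cmat \<Rightarrow> cmat" where
  "mat_adj A = (\<lambda>i j. cnj (A j i))"

definition commut :: "nat \<Rightarrow> cmat \<Rightarrow> cmat \<Rightarrow> cmat" where
  "commut n A B = (\<lambda>i j. mat_mul n A B i j - mat_mul n B A i j)"

definition rnorm :: "nat \<Rightarrow> cvec \<Rightarrow> real" where
  "rnorm n v = sqrt (\<Sum>i<n. (cmod (v i))\<^sup>2) / sqrt (real n)"

definition H1 :: "nat \<Rightarrow> cmat" where
  "H1 n = (\<lambda>i j. of_nat (n^2) *
     (if i = j then 2 else if j = (i + 1) mod n \<or> i = (j + 1) mod n then -1 else 0))"

definition H2 :: "(real \<Rightarrow> real) \<Rightarrow> nat \<Rightarrow> cmat" where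
  "H2 V n = (\<lambda>i j. if i = j then complex_of_real (V (real i / real n)) else 0)"

definition D1 :: "nat \<Rightarrow> cmat" where
  "D1 n = (\<lambda>i j. of_nat n *
     ((if j = (i + n - 1) mod n then 1 else 0) - (if j = i then 1 else 0)))"

definition C4 :: "(real \<Rightarrow> real) \<Rightarrow> bool" where
  "C4 V \<longleftrightarrow> (\<exists>f :: nat \<Rightarrow> real \<Rightarrow> real. f 0 = V \<and>
     (\<forall>k<4. \<forall>x. (f k has_real_derivative f (Suc k) x) (at x)) \<and>
     continuous_on UNIV (f 4))"

end

theory Submission
  imports Defs
begin


lemma V_int_periodic:
  fixes V :: "real \<Rightarrow> real"
  assumes periodic: "\<And>x. V (x + 1) = V x"
  shows "V (x + of_int m) = V x"
proof -
  have nat: "V (y + of_nat k) = V y" for y k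
  proof (induction k)
    case (Suc k)
    have "V (y + of_nat (Suc k)) = V ((y + of_nat k) + 1)" by (simp add: algebra_simps)
    then show ?case using Suc periodic by simp
  qed simp
  show ?thesis
  proof (cases "m \<ge> 0")
    case True then show ?thesis using nat[of x "nat m"] by simp
  next
    case False
    have "V (x + of_int m + of_nat (nat (-m))) = V (x + of_int m)" by (rule nat)
    then show ?thesis using False by simp
  qed
qed

fun dd :: "real \<Rightarrow> nat \<Rightarrow> (real \<Rightarrow> real) \<Rightarrow> real \<Rightarrow> real" where
  "dd h 0 g x = g x"
| "dd h (Suc k) g x = dd h k g (x + h) - dd h k g x"

lemma dd_deriv:
  assumes "\<And>x. (g has_real_derivative g' x) (at x)"
  shows "(dd h k g has_real_derivative dd h k g' x) (at x)"
proof (induction k arbitrary: x)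
  case 0 then show ?case using assms by simp
next
  case (Suc k)
  have "((\<lambda>x. dd h k g (x + h)) has_real_derivative dd h k g' (x + h)) (at x)"
    using Suc[of "x + h"] by (simp add: DERIV_shift)
  then have "((\<lambda>x. dd h k g (x + h) - dd h k g x) has_real_derivative
     dd h k g' (x + h) - dd h k g' x) (at x)"
    by (intro DERIV_diff Suc)
  then show ?case by simp
qed

lemma dd_bound:
  fixes f :: "nat \<Rightarrow> real \<Rightarrow> real"
  assumes der: "\<And>k x. k < 4 \<Longrightarrow> (f k has_real_derivative f (Suc k) x) (at x)"
    and bnd: "\<And>m x. m \<le> 4 \<Longrightarrow> \<bar>f m x\<bar> \<le> B m"
    and h: "h > 0"
  shows "j + k \<le> 4 \<Longrightarrow> \<bar>dd h k (f j) x\<bar> \<le> h ^ k * B (j + k)"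
proof (induction k arbitrary: j x)
  case 0 then show ?case using bnd by simp
next
  case (Suc k)
  have d: "\<And>y. (dd h k (f j) has_real_derivative dd h k (f (Suc j)) y) (at y)"
    by (rule dd_deriv) (use der Suc.prems in auto)
  obtain z where z: "dd h k (f j) (x + h) - dd h k (f j) x = (x + h - x) * dd h k (f (Suc j)) z"
    using MVT2[of x "x + h" "dd h k (f j)" "dd h k (f (Suc j))"] d h by auto
  have "\<bar>dd h k (f (Suc j)) z\<bar> \<le> h ^ k * B (Suc j + k)"
    using Suc.IH[of "Suc j" z] Suc.prems by simp
  then have "\<bar>h * dd h k (f (Suc j)) z\<bar> \<le> h * (h ^ k * B (Suc j + k))"
    using h by (simp add: abs_mult mult_left_mono)
  then show ?case using z by simp
qed

lemma C4_bounds: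
  fixes V :: "real \<Rightarrow> real"
  assumes periodic: "\<And>x. V (x + 1) = V x"
    and smooth: "C4 V"
  shows "\<exists>f B. f 0 = V \<and> (\<forall>k x. k < 4 \<longrightarrow> (f k has_real_derivative f (Suc k) x) (at x))
     \<and> (\<forall>m x. m \<le> 4 \<longrightarrow> \<bar>f m x\<bar> \<le> B m) \<and> (\<forall>m. 0 \<le> B m)"
proof -
  obtain f :: "nat \<Rightarrow> real \<Rightarrow> real" where f0: "f 0 = V"
    and der: "\<And>k x. k < 4 \<Longrightarrow> (f k has_real_derivative f (Suc k) x) (at x)"
    and c4: "continuous_on UNIV (f 4)"
    using smooth unfolding C4_def by blast
  have per: "m \<le> 4 \<Longrightarrow> f m (x + 1) = f m x" for m x
  proof (induction m arbitrary: x)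
    case 0 then show ?case using f0 periodic by simp
  next
    case (Suc m)
    have "(f m has_real_derivative f (Suc m) (x + 1)) (at (x + 1))"
      using der Suc.prems by simp
    then have "((\<lambda>y. f m (y + 1)) has_real_derivative f (Suc m) (x + 1)) (at x)"
      by (simp add: DERIV_shift)
    moreover have "(\<lambda>y. f m (y + 1)) = f m" using Suc by auto
    ultimately have "(f m has_real_derivative f (Suc m) (x + 1)) (at x)" by simp
    moreover have "(f m has_real_derivative f (Suc m) x) (at x)" using der Suc.prems by simp
    ultimately show ?case by (rule DERIV_unique)
  qed
  have cont: "m \<le> 4 \<Longrightarrow> isCont (f m) x" for m x
  proof (cases "m < 4")
    case True then show ?thesis using der DERIV_isCont by blast
  next
    case False
    moreover assume "m \<le> 4"
    ultimately have "m = 4" by simp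
    then show ?thesis using c4 by (simp add: continuous_on_eq_continuous_at)
  qed
  have "\<exists>M. \<forall>x. \<bar>f m x\<bar> \<le> M" if m: "m \<le> 4" for m
  proof -
    have "\<exists>M. \<forall>x. 0 \<le> x \<and> x \<le> 1 \<longrightarrow> \<bar>f m x\<bar> \<le> M"
      by (rule isCont_bounded) (use cont m in \<open>auto intro: continuous_intros\<close>)
    then obtain M where M: "\<And>x. 0 \<le> x \<Longrightarrow> x \<le> 1 \<Longrightarrow> \<bar>f m x\<bar> \<le> M" by blast
    have "\<bar>f m x\<bar> \<le> M" for x
    proof -
      have "f m x = f m ((x - of_int \<lfloor>x\<rfloor>) + of_int \<lfloor>x\<rfloor>)" by simp
      also have "\<dots> = f m (x - of_int \<lfloor>x\<rfloor>)"
        by (rule V_int_periodic) (use per m in auto)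
      finally show ?thesis using M[of "x - of_int \<lfloor>x\<rfloor>"]
        by (smt (verit) floor_correct of_int_1 of_int_add)
    qed
    then show ?thesis by blast
  qed
  then obtain B where B: "\<And>m x. m \<le> 4 \<Longrightarrow> \<bar>f m x\<bar> \<le> B m" by metis
  show ?thesis
    by (rule exI[of _ f], rule exI[of _ "\<lambda>m. max 0 (B m)"])
       (use f0 der B in \<open>auto intro: le_max_iff_disj[THEN iffD2]\<close>)
qed



lemma mat_vec_mul: "mat_vec n (mat_mul n A B) v = mat_vec n A (mat_vec n B v)"
  unfolding mat_vec_def mat_mul_def
  by (auto simp: sum_distrib_left sum_distrib_right mult.assoc intro!: ext sum.swap)

lemma mat_vec_commut:
  "mat_vec n (commut n A B) v = (\<lambda>i. mat_vec n A (mat_vec n B v) i - mat_vec n B (mat_vec n A v) i)"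
  unfolding commut_def mat_vec_mul[symmetric]
  by (simp add: mat_vec_def left_diff_distrib sum_subtractf)

lemma mat_vec_cong: "(\<And>j. j < n \<Longrightarrow> w j = w' j) \<Longrightarrow> mat_vec n A w = mat_vec n A w'"
  unfolding mat_vec_def by auto

lemma suc_mod: "(i::nat) < n \<Longrightarrow> (i + 1) mod n = (if i + 1 = n then 0 else i + 1)"
proof (cases "i + 1 = n")
  case False
  assume "i < n"
  then have "i + 1 < n" using False by linarith
  then show ?thesis using False by simp
qed simp

lemma pred_mod: "(i::nat) < n \<Longrightarrow> (i + n - 1) mod n = (if i = 0 then n - 1 else i - 1)"
proof (cases "i = 0")
  case False
  assume "i < n"
  then have e: "i + n - 1 = (i - 1) + n" using False by linarith
  have "(i + n - 1) mod n = (i - 1) mod n" unfolding e by simp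
  also have "\<dots> = i - 1" using \<open>i < n\<close> by simp
  finally show ?thesis using False by simp
qed simp

lemma H1_alt:
  assumes "i < n" "j < n" "3 \<le> n"
  shows "H1 n i j = of_nat (n^2) * ((if j = i then 2 else 0) - (if j = (i + 1) mod n then 1 else 0)
     - (if j = (i + n - 1) mod n then 1 else 0))"
  using assms unfolding H1_def suc_mod[OF assms(1)] pred_mod[OF assms(1)] suc_mod[OF assms(2)]
  by auto

lemma mat_vec_H1:
  assumes "i < n" "3 \<le> n"
  shows "mat_vec n (H1 n) w i = of_nat (n^2) * (2 * w i - w ((i + 1) mod n) - w ((i + n - 1) mod n))"
proof -
  have "mat_vec n (H1 n) w i = (\<Sum>j<n. of_nat (n^2) * ((if j = i then 2 * w j else 0)
     - (if j = (i + 1) mod n then w j else 0) - (if j = (i + n - 1) mod n then w j else 0)))"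
    unfolding mat_vec_def using assms by (intro sum.cong refl) (simp add: H1_alt algebra_simps)
  also have "\<dots> = of_nat (n^2) * (2 * w i - w ((i + 1) mod n) - w ((i + n - 1) mod n))"
    using assms by (simp add: sum_distrib_left[symmetric] sum_subtractf)
  finally show ?thesis .
qed

lemma mat_vec_D1:
  assumes "i < n"
  shows "mat_vec n (D1 n) w i = of_nat n * (w ((i + n - 1) mod n) - w i)"
proof -
  have "mat_vec n (D1 n) w i = (\<Sum>j<n. of_nat n * ((if j = (i + n - 1) mod n then w j else 0)
     - (if j = i then w j else 0)))"
    unfolding mat_vec_def D1_def by (intro sum.cong refl) (simp add: algebra_simps)
  also have "\<dots> = of_nat n * (w ((i + n - 1) mod n) - w i)"
    using assms by (simp add: sum_distrib_left[symmetric] sum_subtractf)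
  finally show ?thesis .
qed

lemma mat_vec_H2:
  assumes "i < n"
  shows "mat_vec n (H2 V n) w i = complex_of_real (V (real i / real n)) * w i"
proof -
  have "mat_vec n (H2 V n) w i = (\<Sum>j<n. if j = i then complex_of_real (V (real i / real n)) * w j else 0)"
    unfolding mat_vec_def H2_def by (intro sum.cong refl) auto
  then show ?thesis using assms by simp
qed

definition pext :: "nat \<Rightarrow> cvec \<Rightarrow> int \<Rightarrow> complex" where
  "pext n v j = v (nat (j mod int n))"

lemma pext_int: "i < n \<Longrightarrow> pext n w (int i) = w i"
  unfolding pext_def by simp

lemma pext_mod: "pext n w (j mod int n + c) = pext n w (j + c)"
  unfolding pext_def by (simp add: mod_add_left_eq)

lemma pext_periodic: "pext n w (j + int n) = pext n w j"
  unfolding pext_def by simp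

lemma pext_plus1: "i < n \<Longrightarrow> pext n w (int i + 1) = w ((i + 1) mod n)"
proof -
  have "(int i + 1) mod int n = int ((i + 1) mod n)" by (simp add: of_nat_mod add.commute)
  then show ?thesis unfolding pext_def by simp
qed

lemma pext_minus1:
  assumes "i < n" shows "pext n w (int i - 1) = w ((i + n - 1) mod n)"
proof -
  have e: "int i - 1 = int (i + n - 1) + (- 1) * int n" using assms by simp
  have "(int i - 1) mod int n = int (i + n - 1) mod int n" unfolding e by (rule mod_mult_self1)
  also have "\<dots> = int ((i + n - 1) mod n)" by (simp add: of_nat_mod)
  finally have "(int i - 1) mod int n = int ((i + n - 1) mod n)" .
  then show ?thesis unfolding pext_def by simp
qed

lemma pext_diff: "pext n (\<lambda>i. a i - b i) = (\<lambda>j. pext n a j - pext n b j)"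
  unfolding pext_def by auto

definition Lop :: "nat \<Rightarrow> (int \<Rightarrow> complex) \<Rightarrow> int \<Rightarrow> complex" where
  "Lop n z j = of_nat (n^2) * (2 * z j - z (j + 1) - z (j - 1))"

definition Dop :: "nat \<Rightarrow> (int \<Rightarrow> complex) \<Rightarrow> int \<Rightarrow> complex" where
  "Dop n z j = of_nat n * (z (j - 1) - z j)"

definition Mop :: "(real \<Rightarrow> real) \<Rightarrow> nat \<Rightarrow> (int \<Rightarrow> complex) \<Rightarrow> int \<Rightarrow> complex" where
  "Mop V n z j = complex_of_real (V (of_int j / of_nat n)) * z j"

lemma nat_mod_facts:
  assumes "0 < n"
  shows "nat (j mod int n) < n" "int (nat (j mod int n)) = j mod int n"
  using assms by (simp_all add: nat_less_iff)

lemma pext_H1: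
  assumes "3 \<le> n"
  shows "pext n (mat_vec n (H1 n) w) = Lop n (pext n w)"
proof
  fix j
  define i where "i = nat (j mod int n)"
  have i: "i < n" "int i = j mod int n" using nat_mod_facts[of n j] assms i_def by auto
  have "pext n (mat_vec n (H1 n) w) j = mat_vec n (H1 n) w i" unfolding pext_def i_def ..
  also have "\<dots> = of_nat (n^2) * (2 * pext n w (int i) - pext n w (int i + 1) - pext n w (int i - 1))"
    using mat_vec_H1[OF i(1) assms] by (simp only: pext_int[OF i(1)] pext_plus1[OF i(1)] pext_minus1[OF i(1)])
  also have "\<dots> = Lop n (pext n w) j"
    unfolding i(2) Lop_def using pext_mod[of n w j 0] pext_mod[of n w j 1] pext_mod[of n w j "-1"]
    by simp
  finally show "pext n (mat_vec n (H1 n) w) j = Lop n (pext n w) j" .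
qed

lemma pext_D1:
  assumes "0 < n"
  shows "pext n (mat_vec n (D1 n) w) = Dop n (pext n w)"
proof
  fix j
  define i where "i = nat (j mod int n)"
  have i: "i < n" "int i = j mod int n" using nat_mod_facts[of n j] assms i_def by auto
  have "pext n (mat_vec n (D1 n) w) j = mat_vec n (D1 n) w i" unfolding pext_def i_def ..
  also have "\<dots> = of_nat n * (pext n w (int i - 1) - pext n w (int i))"
    using mat_vec_D1[OF i(1)] by (simp only: pext_int[OF i(1)] pext_minus1[OF i(1)])
  also have "\<dots> = Dop n (pext n w) j"
    unfolding i(2) Dop_def using pext_mod[of n w j 0] pext_mod[of n w j "-1"]
    by simp
  finally show "pext n (mat_vec n (D1 n) w) j = Dop n (pext n w) j" .
qed

lemma pext_H2:
  fixes V :: "real \<Rightarrow> real"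
  assumes periodic: "\<And>x. V (x + 1) = V x" and "0 < n"
  shows "pext n (mat_vec n (H2 V n) w) = Mop V n (pext n w)"
proof
  fix j
  define i where "i = nat (j mod int n)"
  have i: "i < n" "int i = j mod int n" using nat_mod_facts[of n j] assms i_def by auto
  have "pext n (mat_vec n (H2 V n) w) j = mat_vec n (H2 V n) w i" unfolding pext_def i_def ..
  also have "\<dots> = complex_of_real (V (real i / real n)) * pext n w (int i)"
    using mat_vec_H2[OF i(1)] by (simp only: pext_int[OF i(1)])
  also have "V (real i / real n) = V (of_int j / of_nat n)"
  proof -
    have "j = j div int n * int n + j mod int n" by simp
    then have "real_of_int j = real_of_int (j div int n * int n + j mod int n)" by (rule arg_cong)
    then have "real_of_int j = real_of_int (j div int n) * real n + real_of_int (j mod int n)"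
      by (simp only: of_int_add of_int_mult of_int_of_nat_eq)
    then have "of_int j / real n = of_int (j mod int n) / real n + of_int (j div int n)"
      using assms(2) by (simp add: field_simps)
    then have "V (of_int j / of_nat n) = V (of_int (j mod int n) / real n)"
      using V_int_periodic[of V, OF periodic, of "of_int (j mod int n) / real n" "j div int n"] by simp
    then show ?thesis using i(2) by (metis of_int_of_nat_eq)
  qed
  finally show "pext n (mat_vec n (H2 V n) w) j = Mop V n (pext n w) j"
    unfolding Mop_def using pext_mod[of n w j 0] i by simp
qed



definition NN :: "nat \<Rightarrow> (int \<Rightarrow> real) \<Rightarrow> real" where
  "NN n f = L2_set (\<lambda>i. f (int i)) {..<n}"

lemma rnorm_NN: "rnorm n v = NN n (\<lambda>j. cmod (pext n v j)) / sqrt (real n)"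
  unfolding rnorm_def NN_def L2_set_def by (simp add: pext_int)

lemma sum_shift1:
  fixes g :: "int \<Rightarrow> 'a::ab_group_add"
  assumes "\<And>j. g (j + int n) = g j"
  shows "(\<Sum>i<n. g (int i + 1)) = (\<Sum>i<n. g (int i))"
proof -
  have "(\<Sum>i<Suc n. g (int i)) = g 0 + (\<Sum>i<n. g (int (Suc i)))"
    using sum.atLeast0_lessThan_Suc_shift[of "\<lambda>i. g (int i)" n] by (simp add: atLeast0LessThan)
  moreover have "(\<Sum>i<Suc n. g (int i)) = (\<Sum>i<n. g (int i)) + g (int n)" by simp
  moreover have "g (int n) = g 0" using assms[of 0] by simp
  ultimately show ?thesis by (simp add: add.commute)
qed

lemma sum_shift_nat:
  fixes g :: "int \<Rightarrow> 'a::ab_group_add"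
  assumes "\<And>j. g (j + int n) = g j"
  shows "(\<Sum>i<n. g (int i + int m)) = (\<Sum>i<n. g (int i))"
proof (induction m)
  case (Suc m)
  have "(\<Sum>i<n. g (int i + int (Suc m))) = (\<Sum>i<n. (\<lambda>j. g (j + int m)) (int i + 1))"
    by (simp add: algebra_simps)
  also have "\<dots> = (\<Sum>i<n. (\<lambda>j. g (j + int m)) (int i))"
    by (rule sum_shift1) (metis add.commute add.left_commute assms)
  finally show ?case using Suc by simp
qed simp

lemma sum_shift:
  fixes g :: "int \<Rightarrow> 'a::ab_group_add"
  assumes "\<And>j. g (j + int n) = g j"
  shows "(\<Sum>i<n. g (int i + k)) = (\<Sum>i<n. g (int i))"
proof (cases "k \<ge> 0")
  case True
  then show ?thesis using sum_shift_nat[of g n "nat k", OF assms] by simp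
next
  case False
  have "(\<Sum>i<n. (\<lambda>j. g (j + k)) (int i + int (nat (-k)))) = (\<Sum>i<n. (\<lambda>j. g (j + k)) (int i))"
    by (rule sum_shift_nat[where n=n]) (metis add.commute add.left_commute assms)
  then show ?thesis using False by simp
qed

lemma NN_shift:
  assumes "\<And>j. f (j + int n) = f j"
  shows "NN n (\<lambda>j. f (j + k)) = NN n f"
  unfolding NN_def L2_set_def
  using sum_shift[of "\<lambda>j. (f j)^2" n k] assms by simp

lemma NN_add: "NN n (\<lambda>j. f j + g j) \<le> NN n f + NN n g"
  unfolding NN_def by (rule L2_set_triangle_ineq)

lemma NN_scale: "0 \<le> c \<Longrightarrow> NN n (\<lambda>j. c * f j) = c * NN n f"
  unfolding NN_def by (simp add: L2_set_right_distrib)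

lemma NN_mono: "(\<And>j. 0 \<le> f j) \<Longrightarrow> (\<And>j. f j \<le> g j) \<Longrightarrow> NN n f \<le> NN n g"
  unfolding NN_def by (rule L2_set_mono) auto

lemma NN_nonneg: "0 \<le> NN n f"
  unfolding NN_def by simp

lemma pows: "(x::complex)^2 = x * x" "x^3 = x * x * x" "x^4 = x * x * x * x"
  by (simp_all add: power2_eq_square power3_eq_cube power4_eq_xxxx)

lemma idx: "(j::int) + 1 + 1 = j + 2" "j - 1 - 1 = j - 2" "j + 1 - 1 = j" "j - 1 + 1 = j"
  "j + 2 - 1 = j + 1" "j - 2 + 1 = j - 1" "j + 2 + 1 = j + 3" "j - 2 - 1 = j - 3"
  by simp_all

lemma K_id:
  "Lop n (Mop V n z) j - Mop V n (Lop n z) j =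
    (of_nat n * (complex_of_real (V (of_int (j + 1) / of_nat n)) - complex_of_real (V (of_int j / of_nat n))))
      * (Dop n z (j + 1) + Dop n z j)
    - of_nat (n^2) * (complex_of_real (V (of_int (j + 1) / of_nat n)) - 2 * complex_of_real (V (of_int j / of_nat n))
        + complex_of_real (V (of_int (j - 1) / of_nat n))) * z (j - 1)"
  unfolding Lop_def Mop_def Dop_def idx of_nat_power pows by (simp add: algebra_simps)

definition Kop :: "(real \<Rightarrow> real) \<Rightarrow> nat \<Rightarrow> (int \<Rightarrow> complex) \<Rightarrow> int \<Rightarrow> complex" where
  "Kop V n z j = Lop n (Mop V n z) j - Mop V n (Lop n z) j"

lemma Q_id:
  fixes V n z j
  defines "W \<equiv> \<lambda>k. complex_of_real (V (of_int (j + k) / of_nat n))"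
  shows
  "Lop n (Kop V n z) j - Kop V n (Lop n z) j =
    of_nat (n^2) * (W 1 - 2 * W 0 + W (-1)) * (- Lop n z (j + 1) - 2 * Lop n z j - Lop n z (j - 1))
  + of_nat (n^3) * (W 2 - 3 * W 1 + 3 * W 0 - W (-1)) * (- Dop n z (j + 2) - Dop n z (j + 1) - Dop n z j - Dop n z (j - 1))
  + of_nat (n^4) * (W 2 - 4 * W 1 + 6 * W 0 - 4 * W (-1) + W (-2)) * z (j - 2)"
  unfolding W_def Kop_def Lop_def Mop_def Dop_def idx of_nat_power pows by (simp add: algebra_simps)



lemma interp:
  assumes per: "\<And>j. z (j + int n) = z j"
  shows "(NN n (\<lambda>j. cmod (Dop n z j)))^2 \<le> NN n (\<lambda>j. cmod (z j)) * NN n (\<lambda>j. cmod (Lop n z j))"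
proof -
  have sq: "(NN n (\<lambda>j. cmod (Dop n z j)))^2 = (\<Sum>i<n. (cmod (Dop n z (int i)))^2)"
    unfolding NN_def L2_set_def by (simp add: sum_nonneg)
  define A where "A = (\<Sum>i<n. z (int i) * cnj (z (int i)))"
  define B where "B = (\<Sum>i<n. z (int i - 1) * cnj (z (int i)))"
  define C where "C = (\<Sum>i<n. z (int i + 1) * cnj (z (int i)))"
  have A1: "(\<Sum>i<n. z (int i - 1) * cnj (z (int i - 1))) = A"
    unfolding A_def using sum_shift[of "\<lambda>j. z j * cnj (z j)" n "-1"] per by simp
  have per1: "\<And>j. z (j + int n + 1) = z (j + 1)" using per by (metis add.commute add.left_commute)
  have BC: "(\<Sum>i<n. z (int i) * cnj (z (int i - 1))) = C"
    unfolding C_def using sum_shift[of "\<lambda>j. z (j + 1) * cnj (z j)" n "-1"] per per1 by simp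
  have e1: "Dop n z i * cnj (Dop n z i) = of_nat (n^2) * (z (i - 1) * cnj (z (i - 1)) + z i * cnj (z i)
     - z (i - 1) * cnj (z i) - z i * cnj (z (i - 1)))" for i
    by (simp add: Dop_def algebra_simps power2_eq_square)
  have e2: "cnj (z i) * Lop n z i = of_nat (n^2) * (2 * (z i * cnj (z i))
     - z (i + 1) * cnj (z i) - z (i - 1) * cnj (z i))" for i
    by (simp add: Lop_def algebra_simps)
  have "complex_of_real (\<Sum>i<n. (cmod (Dop n z (int i)))^2) = (\<Sum>i<n. Dop n z (int i) * cnj (Dop n z (int i)))"
    unfolding of_real_sum by (simp only: complex_norm_square)
  also have "\<dots> = of_nat (n^2) * ((\<Sum>i<n. z (int i - 1) * cnj (z (int i - 1))) + A
     - B - (\<Sum>i<n. z (int i) * cnj (z (int i - 1))))"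
    unfolding e1 A_def B_def by (simp add: sum_distrib_left[symmetric] sum.distrib sum_subtractf)
  also have "\<dots> = of_nat (n^2) * (2 * A - B - C)" unfolding A1 BC by simp
  also have "\<dots> = of_nat (n^2) * (2 * A - C - B)" by simp
  also have "\<dots> = of_nat (n^2) * (\<Sum>i<n. 2 * (z (int i) * cnj (z (int i)))
      - z (int i + 1) * cnj (z (int i)) - z (int i - 1) * cnj (z (int i)))"
    unfolding A_def B_def C_def by (simp add: sum_subtractf sum_distrib_left[symmetric])
  also have "\<dots> = (\<Sum>i<n. cnj (z (int i)) * Lop n z (int i))"
    unfolding e2 by (simp add: sum_distrib_left)
  finally have eq: "complex_of_real (\<Sum>i<n. (cmod (Dop n z (int i)))^2) = (\<Sum>i<n. cnj (z (int i)) * Lop n z (int i))" .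
  have "(\<Sum>i<n. (cmod (Dop n z (int i)))^2) = cmod (complex_of_real (\<Sum>i<n. (cmod (Dop n z (int i)))^2))"
    by (simp only: norm_of_real) (simp add: sum_nonneg)
  also have "\<dots> \<le> (\<Sum>i<n. cmod (cnj (z (int i)) * Lop n z (int i)))" unfolding eq by (rule norm_sum)
  also have "\<dots> = (\<Sum>i<n. \<bar>cmod (z (int i))\<bar> * \<bar>cmod (Lop n z (int i))\<bar>)" by (simp add: norm_mult)
  also have "\<dots> \<le> NN n (\<lambda>j. cmod (z j)) * NN n (\<lambda>j. cmod (Lop n z j))"
    unfolding NN_def by (rule L2_set_mult_ineq)
  finally show ?thesis using sq by simp
qed

lemma interp2:
  assumes per: "\<And>j. z (j + int n) = z j"
  shows "NN n (\<lambda>j. cmod (Dop n z j)) \<le> (NN n (\<lambda>j. cmod (z j)) + NN n (\<lambda>j. cmod (Lop n z j))) / 2"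
proof (rule power2_le_imp_le)
  let ?a = "NN n (\<lambda>j. cmod (z j))" and ?b = "NN n (\<lambda>j. cmod (Lop n z j))"
  have "(NN n (\<lambda>j. cmod (Dop n z j)))^2 \<le> ?a * ?b" by (rule interp[of z n, OF per])
  also have "\<dots> \<le> ((?a + ?b) / 2)^2"
    using sum_squares_ge_zero[of "?a - ?b" 0] by (simp add: power2_eq_square field_simps)
  finally show "(NN n (\<lambda>j. cmod (Dop n z j)))^2 \<le> ((?a + ?b) / 2)^2" .
  show "0 \<le> (?a + ?b) / 2" using NN_nonneg[of n] by simp
qed



lemma sum_ind2: "(\<Sum>k<(n::nat). if k = a \<and> k = b then (1::complex) else 0) = (if a = b \<and> a < n then 1 else 0)"
proof (cases "a = b")
  case True then show ?thesis by simp
next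
  case False
  have "(\<Sum>k<n. if k = a \<and> k = b then (1::complex) else 0) = (\<Sum>k<n. 0)"
    by (rule sum.cong) (use False in auto)
  then show ?thesis using False by simp
qed

lemma ind_mult: "(if P then (1::complex) else 0) * (if Q then 1 else 0) = (if P \<and> Q then 1 else 0)"
  by simp

lemma pred_iff:
  assumes "(k::nat) < n" "i < n"
  shows "(i = (k + n - 1) mod n) = (k = (i + 1) mod n)"
  using assms unfolding pred_mod[OF assms(1)] suc_mod[OF assms(2)] by auto

lemma H1_D1:
  assumes n: "3 \<le> n" and i: "i < n" and j: "j < n"
  shows "H1 n i j = mat_mul n (mat_adj (D1 n)) (D1 n) i j"
proof -
  have "mat_mul n (mat_adj (D1 n)) (D1 n) i j =
    (\<Sum>k<n. of_nat n * of_nat n * ((if k = (i + 1) mod n \<and> k = (j + 1) mod n then 1 else 0)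
       - (if k = (i + 1) mod n \<and> k = j then 1 else 0) - (if k = i \<and> k = (j + 1) mod n then 1 else 0)
       + (if k = i \<and> k = j then 1 else 0)))"
    unfolding mat_mul_def mat_adj_def
  proof (intro sum.cong refl)
    fix k assume "k \<in> {..<n}"
    then have k: "k < n" by simp
    have Dk: "\<And>l. l < n \<Longrightarrow> D1 n k l = of_nat n * ((if k = (l + 1) mod n then 1 else 0) - (if k = l then 1 else 0))"
      unfolding D1_def using pred_iff[OF k] by simp
    show "cnj (D1 n k i) * D1 n k j = of_nat n * of_nat n * ((if k = (i + 1) mod n \<and> k = (j + 1) mod n then 1 else 0)
       - (if k = (i + 1) mod n \<and> k = j then 1 else 0) - (if k = i \<and> k = (j + 1) mod n then 1 else 0)
       + (if k = i \<and> k = j then 1 else 0))"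
      unfolding Dk[OF i] Dk[OF j] by (simp add: algebra_simps ind_mult)
  qed
  also have "\<dots> = of_nat n * of_nat n * ((if (i + 1) mod n = (j + 1) mod n then 1 else 0)
       - (if (i + 1) mod n = j then 1 else 0) - (if i = (j + 1) mod n then 1 else 0)
       + (if i = j then 1 else 0))"
    using i j by (simp add: sum_distrib_left[symmetric] sum.distrib sum_subtractf sum_ind2)
  also have "\<dots> = H1 n i j"
  proof -
    have f1: "((i + 1) mod n = (j + 1) mod n) = (i = j)"
      using i j n unfolding suc_mod[OF i] suc_mod[OF j] by auto
    have f2: "(i + 1) mod n \<noteq> i" "(j + 1) mod n \<noteq> j"
      using i j n unfolding suc_mod[OF i] suc_mod[OF j] by auto
    have f3: "\<not> ((i + 1) mod n = j \<and> (j + 1) mod n = i)"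
      using i j n unfolding suc_mod[OF i] suc_mod[OF j] by auto
    show ?thesis
      unfolding H1_def f1 using f2 f3 by (cases "i = j"; cases "(i + 1) mod n = j"; cases "(j + 1) mod n = i")
        (auto simp: power2_eq_square)
  qed
  finally show ?thesis by simp
qed



lemma Kop_eq: "Kop V n z = (\<lambda>j. Lop n (Mop V n z) j - Mop V n (Lop n z) j)"
  by (rule ext) (simp add: Kop_def)

lemma pext_K:
  assumes periodic: "\<And>x. V (x + 1) = V x" and n: "3 \<le> n"
  shows "pext n (mat_vec n (commut n (H1 n) (H2 V n)) w) = Kop V n (pext n w)"
proof -
  have np: "0 < n" using n by simp
  show ?thesis
    by (simp only: mat_vec_commut pext_diff pext_H1[OF n] pext_H2[of V, OF periodic np] Kop_eq)
qed

lemma pext_Q: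
  assumes periodic: "\<And>x. V (x + 1) = V x" and n: "3 \<le> n"
  shows "pext n (mat_vec n (commut n (H1 n) (commut n (H1 n) (H2 V n))) w)
     = (\<lambda>j. Lop n (Kop V n (pext n w)) j - Kop V n (Lop n (pext n w)) j)"
proof -
  have np: "0 < n" using n by simp
  show ?thesis
    by (simp only: mat_vec_commut pext_diff pext_H1[OF n] pext_H2[of V, OF periodic np] Kop_eq)
qed

lemma coef:
  assumes "\<bar>r\<bar> \<le> h ^ k * B" "h = 1 / real n" "0 < n"
  shows "cmod (of_nat (n ^ k) * complex_of_real r) \<le> B"
proof -
  have "cmod (of_nat (n ^ k) * complex_of_real r) = real n ^ k * \<bar>r\<bar>"
    by (simp add: norm_mult norm_power)
  also have "\<dots> \<le> real n ^ k * (h ^ k * B)"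
    using assms(1) by (intro mult_left_mono) auto
  also have "\<dots> = (real n * h) ^ k * B" by (simp add: power_mult_distrib)
  also have "real n * h = 1" using assms(2,3) by simp
  finally show ?thesis by simp
qed

lemma bnd2:
  assumes "cmod a \<le> A" "cmod s \<le> S"
  shows "cmod (a * (d1 + d0) - s * zm) \<le> A * cmod d1 + A * cmod d0 + S * cmod zm"
proof -
  have "cmod (a * (d1 + d0) - s * zm) \<le> cmod (a * (d1 + d0)) + cmod (s * zm)"
    by (rule norm_triangle_ineq4)
  also have "\<dots> \<le> cmod a * (cmod d1 + cmod d0) + cmod s * cmod zm"
    by (simp add: norm_mult mult_left_mono norm_triangle_ineq)
  also have "\<dots> \<le> A * (cmod d1 + cmod d0) + S * cmod zm"
    using assms by (intro add_mono mult_right_mono) auto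
  finally show ?thesis by (simp add: algebra_simps)
qed

lemma bnd3:
  assumes "cmod s \<le> S" "cmod t \<le> T" "cmod r \<le> R"
  shows "cmod (s * (- l1 - 2 * l0 - lm) + t * (- d2 - d1 - d0 - dm) + r * w)
    \<le> S * (cmod l1 + 2 * cmod l0 + cmod lm) + T * (cmod d2 + cmod d1 + cmod d0 + cmod dm) + R * cmod w"
proof -
  have l: "cmod (- l1 - 2 * l0 - lm) \<le> cmod l1 + 2 * cmod l0 + cmod lm"
  proof -
    have "cmod (- l1 - 2 * l0 - lm) \<le> cmod (- l1 - 2 * l0) + cmod lm" by (rule norm_triangle_ineq4)
    moreover have "cmod (- l1 - 2 * l0) \<le> cmod (- l1) + cmod (2 * l0)" by (rule norm_triangle_ineq4)
    ultimately show ?thesis by (simp add: norm_mult)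
  qed
  have d: "cmod (- d2 - d1 - d0 - dm) \<le> cmod d2 + cmod d1 + cmod d0 + cmod dm"
  proof -
    have "cmod (- d2 - d1 - d0 - dm) \<le> cmod (- d2 - d1 - d0) + cmod dm" by (rule norm_triangle_ineq4)
    moreover have "cmod (- d2 - d1 - d0) \<le> cmod (- d2 - d1) + cmod d0" by (rule norm_triangle_ineq4)
    moreover have "cmod (- d2 - d1) \<le> cmod (- d2) + cmod d1" by (rule norm_triangle_ineq4)
    ultimately show ?thesis by simp
  qed
  have "cmod (s * (- l1 - 2 * l0 - lm) + t * (- d2 - d1 - d0 - dm) + r * w)
     \<le> cmod s * cmod (- l1 - 2 * l0 - lm) + cmod t * cmod (- d2 - d1 - d0 - dm) + cmod r * cmod w"
  proof -
    let ?A = "s * (- l1 - 2 * l0 - lm)" and ?B = "t * (- d2 - d1 - d0 - dm)" and ?C = "r * w"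
    have "cmod (?A + ?B + ?C) \<le> cmod (?A + ?B) + cmod ?C" by (rule norm_triangle_ineq)
    moreover have "cmod (?A + ?B) \<le> cmod ?A + cmod ?B" by (rule norm_triangle_ineq)
    ultimately show ?thesis by (simp add: norm_mult)
  qed
  also have "\<dots> \<le> S * (cmod l1 + 2 * cmod l0 + cmod lm) + T * (cmod d2 + cmod d1 + cmod d0 + cmod dm) + R * cmod w"
    using assms l d by (intro add_mono mult_mono) (auto intro: order_trans[OF norm_ge_zero])
  finally show ?thesis .
qed

lemma NN_shift':
  assumes "\<And>j. f (j + int n) = f j"
  shows "NN n (\<lambda>j. f (j - k)) = NN n f"
  using NN_shift[of f n "-k", OF assms] by simp

lemma NN_add3: "NN n (\<lambda>j. a j + b j + c j) \<le> NN n a + NN n b + NN n c"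
  using NN_add[of n "\<lambda>j. a j + b j" c] NN_add[of n a b] by simp

lemma NN_add4: "NN n (\<lambda>j. a j + b j + c j + d j) \<le> NN n a + NN n b + NN n c + NN n d"
  using NN_add[of n "\<lambda>j. a j + b j + c j" d] NN_add3[of n a b c] by simp



lemma div_helper:
  fixes a b c s C :: real
  assumes "a \<le> C * (b + c)" "0 < s"
  shows "a / s \<le> C * (b / s + c / s)"
proof -
  have "C * (b / s + c / s) = (C * (b + c)) / s" by (simp add: add_divide_distrib ring_distribs)
  then show ?thesis using assms by (simp add: divide_right_mono)
qed

theorem lemma8:
  fixes V :: "real \<Rightarrow> real"
  assumes periodic: "\<And>x. V (x + 1) = V x"
    and smooth: "C4 V"
  shows "(\<forall>n\<ge>3. \<forall>i<n. \<forall>j<n. H1 n i j = mat_mul n (mat_adj (D1 n)) (D1 n) i j)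
    \<and> (\<exists>C1 C2 :: real. \<forall>n\<ge>3. \<forall>v :: cvec.
         rnorm n (mat_vec n (commut n (H1 n) (H2 V n)) v)
           \<le> C1 * (rnorm n (mat_vec n (D1 n) v) + rnorm n v)
       \<and> rnorm n (mat_vec n (commut n (H1 n) (commut n (H1 n) (H2 V n))) v)
           \<le> C2 * (rnorm n (mat_vec n (H1 n) v) + rnorm n v))"
proof -
  obtain f B where f0: "f 0 = V"
    and der: "\<forall>k x. k < 4 \<longrightarrow> (f k has_real_derivative f (Suc k) x) (at x)"
    and bnd: "\<forall>m x. m \<le> 4 \<longrightarrow> \<bar>f m x\<bar> \<le> B m" and Bnn: "\<forall>m. 0 \<le> B m"
    using C4_bounds[of V, OF periodic smooth] by blast
  define C1 where "C1 = 2 * B 1 + B 2"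
  define C2 where "C2 = 4 * B 2 + 2 * B 3 + B 4"
  have part1: "\<forall>n\<ge>3. \<forall>i<n. \<forall>j<n. H1 n i j = mat_mul n (mat_adj (D1 n)) (D1 n) i j"
    using H1_D1 by blast
  have part2: "\<forall>n\<ge>3. \<forall>v :: cvec.
         rnorm n (mat_vec n (commut n (H1 n) (H2 V n)) v)
           \<le> C1 * (rnorm n (mat_vec n (D1 n) v) + rnorm n v)
       \<and> rnorm n (mat_vec n (commut n (H1 n) (commut n (H1 n) (H2 V n))) v)
           \<le> C2 * (rnorm n (mat_vec n (H1 n) v) + rnorm n v)"
  proof (intro allI impI)
    fix n :: nat and v :: cvec
    assume n: "3 \<le> n"
    have np: "0 < n" using n by simp
    define h where "h = 1 / real n"
    have hpos: "h > 0" using np h_def by simp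
    have ddb: "\<And>j k x. j + k \<le> 4 \<Longrightarrow> \<bar>dd h k (f j) x\<bar> \<le> h ^ k * B (j + k)"
      by (rule dd_bound[OF _ _ hpos]) (use der bnd in auto)
    have d1: "\<bar>V (x + h) - V x\<bar> \<le> h ^ 1 * B 1" for x
      using ddb[of 0 1 x] f0 by simp
    have d2: "\<bar>V (x + h) - 2 * V x + V (x - h)\<bar> \<le> h ^ 2 * B 2" for x
      using ddb[of 0 2 "x - h"] f0 by (simp add: algebra_simps numeral_eq_Suc)
    have d3: "\<bar>V (x + h + h) - 3 * V (x + h) + 3 * V x - V (x - h)\<bar> \<le> h ^ 3 * B 3" for x
      using ddb[of 0 3 "x - h"] f0 by (simp add: algebra_simps numeral_eq_Suc)
    have d4: "\<bar>V (x + h + h) - 4 * V (x + h) + 6 * V x - 4 * V (x - h) + V (x - h - h)\<bar> \<le> h ^ 4 * B 4" for x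
      using ddb[of 0 4 "x - h - h"] f0 by (simp add: algebra_simps numeral_eq_Suc)
    have sh: "of_int (j + 1) / real n = of_int j / real n + h"
       "of_int (j - 1) / real n = of_int j / real n - h"
       "of_int (j + 2) / real n = of_int j / real n + h + h"
       "of_int (j - 2) / real n = of_int j / real n - h - h" for j :: int
      using np by (simp_all add: h_def field_simps)
    define cV where "cV j = complex_of_real (V (of_int j / of_nat n))" for j :: int
    define a1 where "a1 j = of_nat n * (cV (j + 1) - cV j)" for j
    define s2 where "s2 j = of_nat (n^2) * (cV (j + 1) - 2 * cV j + cV (j - 1))" for j
    define t3 where "t3 j = of_nat (n^3) * (cV (j + 2) - 3 * cV (j + 1) + 3 * cV j - cV (j - 1))" for j
    define r4 where "r4 j = of_nat (n^4) * (cV (j + 2) - 4 * cV (j + 1) + 6 * cV j - 4 * cV (j - 1) + cV (j - 2))" for j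
    have ca1: "cmod (a1 j) \<le> B 1" for j
    proof -
      let ?x = "of_int j / real n"
      have "a1 j = of_nat (n^1) * complex_of_real (V (?x + h) - V ?x)"
        unfolding a1_def cV_def sh by simp
      then show ?thesis using coef[OF d1[of ?x] h_def np] by simp
    qed
    have cs2: "cmod (s2 j) \<le> B 2" for j
    proof -
      let ?x = "of_int j / real n"
      have "s2 j = of_nat (n^2) * complex_of_real (V (?x + h) - 2 * V ?x + V (?x - h))"
        unfolding s2_def cV_def sh by simp
      then show ?thesis using coef[OF d2[of ?x] h_def np] by simp
    qed
    have ct3: "cmod (t3 j) \<le> B 3" for j
    proof -
      let ?x = "of_int j / real n"
      have "t3 j = of_nat (n^3) * complex_of_real (V (?x + h + h) - 3 * V (?x + h) + 3 * V ?x - V (?x - h))"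
        unfolding t3_def cV_def sh by simp
      then show ?thesis using coef[OF d3[of ?x] h_def np] by simp
    qed
    have cr4: "cmod (r4 j) \<le> B 4" for j
    proof -
      let ?x = "of_int j / real n"
      have "r4 j = of_nat (n^4) * complex_of_real (V (?x + h + h) - 4 * V (?x + h) + 6 * V ?x - 4 * V (?x - h) + V (?x - h - h))"
        unfolding r4_def cV_def sh by simp
      then show ?thesis using coef[OF d4[of ?x] h_def np] by simp
    qed
    define z where "z = pext n v"
    have LzE: "Lop n z = pext n (mat_vec n (H1 n) v)" using pext_H1[OF n, of v] z_def by simp
    have DzE: "Dop n z = pext n (mat_vec n (D1 n) v)" using pext_D1[OF np, of v] z_def by simp
    have perz: "\<And>j. cmod (z (j + int n)) = cmod (z j)" by (simp add: z_def pext_periodic)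
    have perz': "\<And>j. z (j + int n) = z j" by (simp add: z_def pext_periodic)
    have perL: "\<And>j. cmod (Lop n z (j + int n)) = cmod (Lop n z j)" by (simp add: LzE pext_periodic)
    have perD: "\<And>j. cmod (Dop n z (j + int n)) = cmod (Dop n z j)" by (simp add: DzE pext_periodic)
    let ?Nz = "NN n (\<lambda>j. cmod (z j))" and ?ND = "NN n (\<lambda>j. cmod (Dop n z j))"
      and ?NL = "NN n (\<lambda>j. cmod (Lop n z j))"
    have Kpt: "cmod (Kop V n z j) \<le> B 1 * cmod (Dop n z (j + 1)) + B 1 * cmod (Dop n z j) + B 2 * cmod (z (j - 1))" for j
    proof -
      have "Kop V n z j = a1 j * (Dop n z (j + 1) + Dop n z j) - s2 j * z (j - 1)"
        unfolding Kop_def K_id a1_def s2_def cV_def ..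
      then show ?thesis using bnd2[OF ca1 cs2] by simp
    qed
    have Qpt: "cmod (Lop n (Kop V n z) j - Kop V n (Lop n z) j) \<le>
        B 2 * (cmod (Lop n z (j + 1)) + 2 * cmod (Lop n z j) + cmod (Lop n z (j - 1)))
      + B 3 * (cmod (Dop n z (j + 2)) + cmod (Dop n z (j + 1)) + cmod (Dop n z j) + cmod (Dop n z (j - 1)))
      + B 4 * cmod (z (j - 2))" for j
    proof -
      have "Lop n (Kop V n z) j - Kop V n (Lop n z) j =
        s2 j * (- Lop n z (j + 1) - 2 * Lop n z j - Lop n z (j - 1))
        + t3 j * (- Dop n z (j + 2) - Dop n z (j + 1) - Dop n z j - Dop n z (j - 1))
        + r4 j * z (j - 2)"
        using Q_id[of n V z j] unfolding s2_def t3_def r4_def cV_def by simp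
      then show ?thesis using bnd3[OF cs2 ct3 cr4] by simp
    qed
    have NK: "NN n (\<lambda>j. cmod (Kop V n z j)) \<le> C1 * (?ND + ?Nz)"
    proof -
      have "NN n (\<lambda>j. cmod (Kop V n z j)) \<le> NN n (\<lambda>j. B 1 * cmod (Dop n z (j + 1)) + B 1 * cmod (Dop n z j) + B 2 * cmod (z (j - 1)))"
        by (rule NN_mono) (use Kpt in auto)
      also have "\<dots> \<le> NN n (\<lambda>j. B 1 * cmod (Dop n z (j + 1))) + NN n (\<lambda>j. B 1 * cmod (Dop n z j)) + NN n (\<lambda>j. B 2 * cmod (z (j - 1)))"
        by (rule NN_add3)
      also have "\<dots> = B 1 * ?ND + B 1 * ?ND + B 2 * ?Nz"
        using Bnn NN_shift[of "\<lambda>j. cmod (Dop n z j)" n 1, OF perD] NN_shift'[of "\<lambda>j. cmod (z j)" n 1, OF perz]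
        by (simp add: NN_scale)
      also have "\<dots> \<le> C1 * (?ND + ?Nz)"
        unfolding C1_def using Bnn NN_nonneg[of n] by (simp add: algebra_simps)
      finally show ?thesis .
    qed
    have NQ: "NN n (\<lambda>j. cmod (Lop n (Kop V n z) j - Kop V n (Lop n z) j)) \<le> C2 * (?NL + ?Nz)"
    proof -
      have "NN n (\<lambda>j. cmod (Lop n (Kop V n z) j - Kop V n (Lop n z) j)) \<le>
        NN n (\<lambda>j. B 2 * (cmod (Lop n z (j + 1)) + 2 * cmod (Lop n z j) + cmod (Lop n z (j - 1)))
      + B 3 * (cmod (Dop n z (j + 2)) + cmod (Dop n z (j + 1)) + cmod (Dop n z j) + cmod (Dop n z (j - 1)))
      + B 4 * cmod (z (j - 2)))"
        by (rule NN_mono) (use Qpt in auto)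
      also have "\<dots> \<le> NN n (\<lambda>j. B 2 * (cmod (Lop n z (j + 1)) + 2 * cmod (Lop n z j) + cmod (Lop n z (j - 1))))
       + NN n (\<lambda>j. B 3 * (cmod (Dop n z (j + 2)) + cmod (Dop n z (j + 1)) + cmod (Dop n z j) + cmod (Dop n z (j - 1))))
       + NN n (\<lambda>j. B 4 * cmod (z (j - 2)))"
        by (rule NN_add3)
      also have "\<dots> = B 2 * NN n (\<lambda>j. cmod (Lop n z (j + 1)) + 2 * cmod (Lop n z j) + cmod (Lop n z (j - 1)))
       + B 3 * NN n (\<lambda>j. cmod (Dop n z (j + 2)) + cmod (Dop n z (j + 1)) + cmod (Dop n z j) + cmod (Dop n z (j - 1)))
       + B 4 * ?Nz"
        using Bnn NN_shift'[of "\<lambda>j. cmod (z j)" n 2, OF perz] by (simp add: NN_scale)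
      also have "\<dots> \<le> B 2 * (4 * ?NL) + B 3 * (4 * ?ND) + B 4 * ?Nz"
      proof -
        have "NN n (\<lambda>j. cmod (Lop n z (j + 1)) + 2 * cmod (Lop n z j) + cmod (Lop n z (j - 1)))
          \<le> NN n (\<lambda>j. cmod (Lop n z (j + 1))) + NN n (\<lambda>j. 2 * cmod (Lop n z j)) + NN n (\<lambda>j. cmod (Lop n z (j - 1)))"
          by (rule NN_add3)
        also have "\<dots> = 4 * ?NL"
          using NN_shift[of "\<lambda>j. cmod (Lop n z j)" n 1, OF perL] NN_shift'[of "\<lambda>j. cmod (Lop n z j)" n 1, OF perL]
          by (simp add: NN_scale)
        finally have L: "NN n (\<lambda>j. cmod (Lop n z (j + 1)) + 2 * cmod (Lop n z j) + cmod (Lop n z (j - 1))) \<le> 4 * ?NL" .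
        have "NN n (\<lambda>j. cmod (Dop n z (j + 2)) + cmod (Dop n z (j + 1)) + cmod (Dop n z j) + cmod (Dop n z (j - 1)))
          \<le> NN n (\<lambda>j. cmod (Dop n z (j + 2))) + NN n (\<lambda>j. cmod (Dop n z (j + 1))) + NN n (\<lambda>j. cmod (Dop n z j)) + NN n (\<lambda>j. cmod (Dop n z (j - 1)))"
          by (rule NN_add4)
        also have "\<dots> = 4 * ?ND"
          using NN_shift[of "\<lambda>j. cmod (Dop n z j)" n 1, OF perD] NN_shift'[of "\<lambda>j. cmod (Dop n z j)" n 1, OF perD]
            NN_shift[of "\<lambda>j. cmod (Dop n z j)" n 2, OF perD]
          by simp
        finally have D: "NN n (\<lambda>j. cmod (Dop n z (j + 2)) + cmod (Dop n z (j + 1)) + cmod (Dop n z j) + cmod (Dop n z (j - 1))) \<le> 4 * ?ND" .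
        show ?thesis using L D Bnn by (intro add_mono mult_left_mono) auto
      qed
      also have "\<dots> \<le> B 2 * (4 * ?NL) + B 3 * (4 * ((?Nz + ?NL) / 2)) + B 4 * ?Nz"
        using interp2[of z n, OF perz'] Bnn by (intro add_mono mult_left_mono) auto
      also have "\<dots> \<le> C2 * (?NL + ?Nz)"
        unfolding C2_def using Bnn NN_nonneg[of n] by (simp add: algebra_simps)
      finally show ?thesis .
    qed
    have sq: "0 < sqrt (real n)" using np by simp
    have r1: "rnorm n (mat_vec n (commut n (H1 n) (H2 V n)) v) = NN n (\<lambda>j. cmod (Kop V n z j)) / sqrt (real n)"
      unfolding rnorm_NN pext_K[of V, OF periodic n] z_def ..
    have r2: "rnorm n (mat_vec n (commut n (H1 n) (commut n (H1 n) (H2 V n))) v)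
       = NN n (\<lambda>j. cmod (Lop n (Kop V n z) j - Kop V n (Lop n z) j)) / sqrt (real n)"
      unfolding rnorm_NN pext_Q[of V, OF periodic n] z_def ..
    have r3: "rnorm n (mat_vec n (D1 n) v) = ?ND / sqrt (real n)"
      unfolding rnorm_NN DzE ..
    have r4: "rnorm n (mat_vec n (H1 n) v) = ?NL / sqrt (real n)"
      unfolding rnorm_NN LzE ..
    have r5: "rnorm n v = ?Nz / sqrt (real n)"
      unfolding rnorm_NN z_def ..
    show "rnorm n (mat_vec n (commut n (H1 n) (H2 V n)) v)
           \<le> C1 * (rnorm n (mat_vec n (D1 n) v) + rnorm n v)
       \<and> rnorm n (mat_vec n (commut n (H1 n) (commut n (H1 n) (H2 V n))) v)
           \<le> C2 * (rnorm n (mat_vec n (H1 n) v) + rnorm n v)"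
      unfolding r1 r2 r3 r4 r5 using div_helper[OF NK sq] div_helper[OF NQ sq] by simp
  qed
  show ?thesis using part1 part2 by blast
qed

end
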